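(* Let $\psi$ be an additive character of $\mathbb{F}_{q^2}$ of conductor $q^2$. If $\rho$ is an irreducible representation of $\mathcal U=U_h^{2,q}(\mathbb{F}_{q^2})$ in which $H_{2(h-1)}$ acts by $\psi$ (i.e. $1+a\tau^{2(h-1)}$ acts by the scalar $\psi(a)$), then the restriction of $\rho$ to $H_0'$ contains the character $\widetilde\psi$.
   Context: Let $p$ be a prime, $q$ a power of $p$, $\ell\ne p$, and $h\ge2$ an integer; representations are over $\overline{\mathbb{Q}}_\ell$. For a commutative $\mathbb{F}_q$-algebra $A$, $U_h^{2,q}(A)$ is the set of formal expressions $1+\sum_{i=1}^{2(h-1)}a_i\tau^i$ ($a_i\in A$) with multiplication obtained by extending $(a\tau^i)(b\tau^j)=ab^{q^i}\tau^{i+j}$ bi-additively, $\tau^0=1$, $\tau^k=0$ for $k>2(h-1)$. In $\mathcal U=U_h^{2,q}(\mathbb{F}_{q^2})$ let $H_{2(h-1)}=\{1+a\tau^{2(h-1)}\}$ and $H_0'=\{1+\sum a_i\tau^i: a_i=0\text{ unless } i=2(h-1)\text{ or } i\text{ is odd with } i>h-1\}$. An additive character $\psi\colon\mathbb{F}_{q^2}\to\overline{\mathbb{Q}}_\ell^\times$ has conductor $q^2$ if there exists $x$ with $\psi(x^q)\ne\psi(x)$; $\widetilde\psi$ is the character $1+\sum a_i\tau^i\mapsto\psi(a_{2(h-1)})$ of $H_0'$. *)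

theory Defs
  imports Main "Jordan_Normal_Form.Matrix"
begin

text \<open>Elements of U_h^{2,q}(A) are encoded by their coefficient sequence
  a :: nat => 'a, standing for 1 + sum_{i=1}^{N} a_i tau^i with N = 2(h-1);
  coefficients outside {1..N} are required to be 0.\<close>

definition U_carrier :: "nat \<Rightarrow> (nat \<Rightarrow> 'a::zero) set" where
  "U_carrier h = {a. \<forall>k. (k < 1 \<or> k > 2 * (h - 1)) \<longrightarrow> a k = 0}"

definition U_one :: "nat \<Rightarrow> 'a::zero" where
  "U_one = (\<lambda>k. 0)"

text \<open>Product: (a tau^i)(b tau^j) = a b^(q^i) tau^(i+j), truncated above degree N.\<close>
definition U_mult :: "nat \<Rightarrow> nat \<Rightarrow> (nat \<Rightarrow> 'a::comm_ring_1) \<Rightarrow> (nat \<Rightarrow> 'a) \<Rightarrow> (nat \<Rightarrow> 'a)" where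
  "U_mult h q a b = (\<lambda>k. if 1 \<le> k \<and> k \<le> 2 * (h - 1)
      then a k + b k + (\<Sum>i\<in>{1..<k}. a i * b (k - i) ^ (q ^ i)) else 0)"

definition H_top_elt :: "nat \<Rightarrow> 'a::zero \<Rightarrow> (nat \<Rightarrow> 'a)" where
  "H_top_elt h c = (\<lambda>k. if k = 2 * (h - 1) then c else 0)"

definition H0' :: "nat \<Rightarrow> (nat \<Rightarrow> 'a::zero) set" where
  "H0' h = {a \<in> U_carrier h. \<forall>i. a i \<noteq> 0 \<longrightarrow> i = 2 * (h - 1) \<or> (odd i \<and> i > h - 1)}"

definition additive_character :: "('a::ab_group_add \<Rightarrow> complex) \<Rightarrow> bool" where
  "additive_character \<psi> \<longleftrightarrow> (\<forall>x. \<psi> x \<noteq> 0) \<and> (\<forall>x y. \<psi> (x + y) = \<psi> x * \<psi> y)"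

definition is_rep :: "'g set \<Rightarrow> ('g \<Rightarrow> 'g \<Rightarrow> 'g) \<Rightarrow> 'g \<Rightarrow> nat \<Rightarrow> ('g \<Rightarrow> complex mat) \<Rightarrow> bool" where
  "is_rep G gmul gone n \<rho> \<longleftrightarrow>
     (\<forall>g\<in>G. \<rho> g \<in> carrier_mat n n) \<and> \<rho> gone = 1\<^sub>m n \<and>
     (\<forall>g\<in>G. \<forall>g'\<in>G. \<rho> (gmul g g') = \<rho> g * \<rho> g')"

definition invariant_subspace :: "'g set \<Rightarrow> nat \<Rightarrow> ('g \<Rightarrow> complex mat) \<Rightarrow> complex vec set \<Rightarrow> bool" where
  "invariant_subspace G n \<rho> W \<longleftrightarrow>
     W \<subseteq> carrier_vec n \<and> 0\<^sub>v n \<in> W \<and>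
     (\<forall>v\<in>W. \<forall>w\<in>W. v + w \<in> W) \<and> (\<forall>c. \<forall>v\<in>W. c \<cdot>\<^sub>v v \<in> W) \<and>
     (\<forall>g\<in>G. \<forall>v\<in>W. \<rho> g *\<^sub>v v \<in> W)"

definition irreducible_rep :: "'g set \<Rightarrow> ('g \<Rightarrow> 'g \<Rightarrow> 'g) \<Rightarrow> 'g \<Rightarrow> nat \<Rightarrow> ('g \<Rightarrow> complex mat) \<Rightarrow> bool" where
  "irreducible_rep G gmul gone n \<rho> \<longleftrightarrow> is_rep G gmul gone n \<rho> \<and> n > 0 \<and>
     (\<forall>W. invariant_subspace G n \<rho> W \<longrightarrow> W = {0\<^sub>v n} \<or> W = carrier_vec n)"

definition restriction_contains :: "'g set \<Rightarrow> nat \<Rightarrow> ('g \<Rightarrow> complex mat) \<Rightarrow> ('g \<Rightarrow> complex) \<Rightarrow> bool" where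
  "restriction_contains H n \<rho> \<chi> \<longleftrightarrow>
     (\<exists>v\<in>carrier_vec n. v \<noteq> 0\<^sub>v n \<and> (\<forall>g\<in>H. \<rho> g *\<^sub>v v = \<chi> g \<cdot>\<^sub>v v))"

end

theory Submission
  imports Defs "HOL-Computational_Algebra.Primes" "HOL-Number_Theory.Residues"
begin



lemma ff_card_pow:
  fixes x :: "'a :: {finite,field}"
  shows "x ^ card (UNIV :: 'a set) = x"
proof (cases "x = 0")
  case False
  have "x * (\<Prod>y\<in>UNIV-{0}. x * y) = x * x ^ (card (UNIV :: 'a set) - 1) * \<Prod>(UNIV-{0})"
    by (simp add: prod.distrib mult_ac)
  also have "x * x ^ (card (UNIV :: 'a set) - 1) = x ^ Suc (card (UNIV :: 'a set) - 1)"
    by (subst power_Suc) auto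
  also have "Suc (card (UNIV :: 'a set) - 1) = card (UNIV :: 'a set)"
    using finite_UNIV_card_ge_0[where ?'a = 'a] by simp
  also have "(\<Prod>y\<in>UNIV-{0}. x * y) = (\<Prod>y\<in>UNIV-{0}. y)"
    by (rule prod.reindex_bij_witness[of _ "\<lambda>y. y / x" "\<lambda>y. x * y"]) (use False in auto)
  finally show ?thesis
    by simp
qed (use finite_UNIV_card_ge_0[where ?'a = 'a] in auto)

lemma ff_card_pow_iter:
  fixes x :: "'a :: {finite,field}"
  shows "x ^ (card (UNIV :: 'a set) ^ k) = x"
  by (induction k) (simp_all add: ff_card_pow power_mult mult.commute[of "card UNIV"] power_mult[symmetric])

lemma ff_char:
  assumes "prime p" "card (UNIV :: 'a :: {finite,field} set) = p ^ k" "k \<ge> 1"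
  shows "CHAR('a) = p"
proof -
  have pos: "CHAR('a) > 0" by (rule finite_imp_CHAR_pos) simp
  have pr: "prime CHAR('a)" using prime_CHAR_semidom[OF pos] .
  have "CHAR('a) dvd p ^ k" using CHAR_dvd_CARD[where 'a='a] assms(2) by simp
  hence "CHAR('a) dvd p" using pr prime_dvd_power by blast
  thus ?thesis using pr assms(1) primes_dvd_imp_eq by blast
qed

lemma ff_frob_add:
  assumes "prime p" "card (UNIV :: 'a :: {finite,field} set) = p ^ k" "k \<ge> 1"
  shows "((x::'a) + y) ^ (p ^ m) = x ^ (p ^ m) + y ^ (p ^ m)"
  using freshmans_dream'[of "p^m" m x y] ff_char[OF assms] assms(1) by simp

lemma qpow0 [simp]: "q > 0 \<Longrightarrow> (0::'a::semiring_1) ^ (q ^ i) = 0"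
  by (simp add: power_0_left)

lemma not_Suc0_le [simp]: "(\<not> Suc 0 \<le> k) = (k = 0)" by auto

definition E :: "nat \<Rightarrow> 'a::zero \<Rightarrow> nat \<Rightarrow> 'a" where
  "E k c = (\<lambda>i. if i = k then c else 0)"

lemma E_carrier: "1 \<le> k \<Longrightarrow> k \<le> 2 * (h - 1) \<Longrightarrow> E k c \<in> U_carrier h"
  by (auto simp: E_def U_carrier_def)

lemma U_mult_carrier: "U_mult h q a b \<in> U_carrier h"
  by (auto simp: U_mult_def U_carrier_def)

lemma H_top_E: "H_top_elt h c = E (2 * (h - 1)) c"
  by (simp add: H_top_elt_def E_def)

lemma mult_hi:
  fixes a b :: "nat \<Rightarrow> 'a::comm_ring_1"
  assumes "q > 0" "a \<in> U_carrier h" "b \<in> U_carrier h"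
    "\<forall>i\<le>h-1. a i = 0" "\<forall>i\<le>h-1. b i = 0"
  shows "U_mult h q a b = (\<lambda>k. a k + b k)"
proof
  fix k
  show "U_mult h q a b k = a k + b k"
  proof (cases "1 \<le> k \<and> k \<le> 2 * (h - 1)")
    case True
    have "(\<Sum>i\<in>{1..<k}. a i * b (k - i) ^ (q ^ i)) = 0"
    proof (rule sum.neutral, rule ballI)
      fix i assume i: "i \<in> {1..<k}"
      show "a i * b (k - i) ^ (q ^ i) = 0"
      proof (cases "i \<le> h - 1")
        case True then show ?thesis using assms(4) by simp
      next
        case False
        hence "k - i \<le> h - 1" using True by auto
        hence "b (k - i) = 0" using assms(5) by simp
        thus ?thesis using assms(1) by simp
      qed
    qed
    thus ?thesis using True by (simp add: U_mult_def)
  next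
    case False
    thus ?thesis using assms(2,3) by (cases "k = 0") (auto simp: U_mult_def U_carrier_def)
  qed
qed

lemma comm_lo:
  fixes a :: "nat \<Rightarrow> 'a::comm_ring_1"
  assumes "q > 0" "a \<in> U_carrier h" "\<forall>i\<le>s. a i = 0" "j + s = 2 * (h - 1)"
  shows "U_mult h q (E j y) a = U_mult h q a (E j y)"
proof
  fix k
  show "U_mult h q (E j y) a k = U_mult h q a (E j y) k"
  proof (cases "1 \<le> k \<and> k \<le> 2 * (h - 1)")
    case True
    have s1: "(\<Sum>i\<in>{1..<k}. E j y i * a (k - i) ^ (q ^ i)) = 0"
    proof (rule sum.neutral, rule ballI)
      fix i assume i: "i \<in> {1..<k}"
      show "E j y i * a (k - i) ^ (q ^ i) = 0"
      proof (cases "i = j")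
        case True
        hence "k - i \<le> s" using \<open>1 \<le> k \<and> k \<le> 2 * (h - 1)\<close> assms(4) by auto
        hence "a (k - i) = 0" using assms(3) by simp
        thus ?thesis using assms(1) by simp
      qed (simp add: E_def)
    qed
    have s2: "(\<Sum>i\<in>{1..<k}. a i * E j y (k - i) ^ (q ^ i)) = 0"
    proof (rule sum.neutral, rule ballI)
      fix i assume i: "i \<in> {1..<k}"
      show "a i * E j y (k - i) ^ (q ^ i) = 0"
      proof (cases "k - i = j")
        case True
        hence "i \<le> s" using \<open>1 \<le> k \<and> k \<le> 2 * (h - 1)\<close> assms(4) i by auto
        hence "a i = 0" using assms(3) by simp
        thus ?thesis by simp
      next
        case False thus ?thesis using assms(1) by (simp add: E_def)
      qed
    qed
    show ?thesis using True s1 s2 by (simp add: U_mult_def add.commute)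
  next
    case False
    thus ?thesis by (auto simp: U_mult_def)
  qed
qed

lemma mult_EE:
  fixes x y :: "'a::comm_ring_1"
  assumes "q > 0" "1 \<le> a"
  shows "U_mult h q (E a x) (E b y) = (\<lambda>k. if 1 \<le> k \<and> k \<le> 2 * (h - 1) then
     E a x k + E b y k + (if a < k \<and> k - a = b then x * y ^ (q ^ a) else 0) else 0)"
proof
  fix k
  have "(\<Sum>i\<in>{1..<k}. E a x i * E b y (k - i) ^ (q ^ i)) =
        (\<Sum>i\<in>{1..<k}. if i = a then x * E b y (k - a) ^ (q ^ a) else 0)"
    by (rule sum.cong) (auto simp: E_def)
  also have "\<dots> = (if a < k \<and> k - a = b then x * y ^ (q ^ a) else 0)"
    using assms by (auto simp: E_def)
  finally show "U_mult h q (E a x) (E b y) k = (if 1 \<le> k \<and> k \<le> 2 * (h - 1) then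
     E a x k + E b y k + (if a < k \<and> k - a = b then x * y ^ (q ^ a) else 0) else 0)"
    by (simp add: U_mult_def)
qed

lemma mult_top:
  fixes c :: "'a::comm_ring_1"
  assumes "q > 0" "a \<in> U_carrier h" "h \<ge> 2"
  shows "U_mult h q a (E (2 * (h - 1)) c) = (\<lambda>k. a k + E (2 * (h - 1)) c k)"
proof
  fix k
  have "(\<Sum>i\<in>{1..<k}. a i * E (2 * (h - 1)) c (k - i) ^ (q ^ i)) = 0 " if "k \<le> 2 * (h - 1)"
    by (rule sum.neutral) (use that assms(1) in \<open>auto simp: E_def\<close>)
  thus "U_mult h q a (E (2 * (h - 1)) c) k = a k + E (2 * (h - 1)) c k"
    using assms(2,3) by (auto simp: U_mult_def U_carrier_def E_def)
qed

lemma comm_ts_N: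
  fixes x y :: "'a::comm_ring_1"
  assumes "q > 0" "1 \<le> j" "j < s" "s + j = N" "h \<ge> 2" "2 * (h - 1) = N"
  shows "U_mult h q (E s x) (E j y) =
    U_mult h q (U_mult h q (E j y) (E s x)) (E N (x * y ^ (q ^ s) - y * x ^ (q ^ j)))"
proof -
  have a1: "1 \<le> s" using assms by simp
  have mt: "U_mult h q (U_mult h q (E j y) (E s x)) (E N c) = (\<lambda>k. U_mult h q (E j y) (E s x) k + E N c k)" for c
    using mult_top[OF assms(1) U_mult_carrier assms(5)] assms(6) by metis
  show ?thesis
    unfolding mt
    unfolding mult_EE[OF assms(1) a1] mult_EE[OF assms(1) assms(2)] assms(6)
    apply (intro ext)
    subgoal for k
    proof (cases "k = N")
      case True
      have "N - j = s" "N - s = j" "j < N" "s < N" "1 \<le> N" using assms by auto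
      thus ?thesis using True assms by (simp add: E_def)
    next
      case False
      have "\<not>(s < k \<and> k - s = j)" "\<not>(j < k \<and> k - j = s)" using assms False by auto
      thus ?thesis using False by (auto simp: E_def add.commute)
    qed
    done
qed

lemma comm_ts:
  fixes x y :: "'a::comm_ring_1"
  assumes "q > 0" "1 \<le> j" "j < s" "s + j = 2 * (h - 1)" "h \<ge> 2"
  shows "U_mult h q (E s x) (E j y) =
    U_mult h q (U_mult h q (E j y) (E s x)) (E (2 * (h - 1)) (x * y ^ (q ^ s) - y * x ^ (q ^ j)))"
  by (rule comm_ts_N) (use assms in auto)

lemma right_cancel:
  fixes a a' g :: "nat \<Rightarrow> 'a::comm_ring_1"
  assumes "a \<in> U_carrier h" "a' \<in> U_carrier h" "U_mult h q a g = U_mult h q a' g"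
  shows "a = a'"
proof -
  have "a k = a' k" for k
  proof (induction k rule: less_induct)
    case (less k)
    show ?case
    proof (cases "1 \<le> k \<and> k \<le> 2 * (h - 1)")
      case True
      have "(\<Sum>i\<in>{1..<k}. a i * g (k - i) ^ (q ^ i)) = (\<Sum>i\<in>{1..<k}. a' i * g (k - i) ^ (q ^ i))"
        by (rule sum.cong) (auto simp: less)
      moreover have "U_mult h q a g k = U_mult h q a' g k" using assms(3) by simp
      ultimately show ?thesis using True by (simp add: U_mult_def)
    next
      case False thus ?thesis using assms(1,2) by (cases "k = 0") (auto simp: U_carrier_def)
    qed
  qed
  thus ?thesis by auto
qed

lemma U_finite: "finite (U_carrier h :: (nat \<Rightarrow> 'a::{finite,zero}) set)"
proof -
  have "U_carrier h = {f :: nat \<Rightarrow> 'a. \<forall>x. (x \<in> {1..2*(h-1)} \<longrightarrow> f x \<in> UNIV) \<and> (x \<notin> {1..2*(h-1)} \<longrightarrow> f x = 0)}"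
    by (auto simp: U_carrier_def)
  thus ?thesis using finite_set_of_finite_funs[of "{1..2*(h-1)}" "UNIV :: 'a set" 0] by simp
qed

lemma left_inv:
  fixes g :: "nat \<Rightarrow> 'a::{finite,comm_ring_1}"
  shows "\<exists>b\<in>U_carrier h. U_mult h q b g = U_one"
proof -
  let ?f = "\<lambda>a. U_mult h q a g"
  have "?f ` U_carrier h = U_carrier h"
    by (rule endo_inj_surj[OF U_finite]) (auto simp: U_mult_carrier inj_on_def intro: right_cancel)
  moreover have "U_one \<in> U_carrier h" by (simp add: U_one_def U_carrier_def)
  ultimately show ?thesis by (metis imageE)
qed




definition vs :: "nat \<Rightarrow> ('a::finite \<Rightarrow> complex vec) \<Rightarrow> complex vec" where
  "vs n f = vec n (\<lambda>r. \<Sum>x\<in>UNIV. f x $ r)"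

lemma vs_carrier[simp]: "vs n f \<in> carrier_vec n"
  by (simp add: vs_def)

lemma dim_vs[simp]: "dim_vec (vs n f) = n"
  by (simp add: vs_def)

lemma vs_index: "r < n \<Longrightarrow> vs n f $ r = (\<Sum>x\<in>UNIV. f x $ r)"
  by (simp add: vs_def)

lemma vs_mult:
  assumes "M \<in> carrier_mat n n" "\<And>x. f x \<in> carrier_vec n"
  shows "M *\<^sub>v vs n f = vs n (\<lambda>x. M *\<^sub>v f x)"
proof (rule eq_vecI)
  fix i assume "i < dim_vec (vs n (\<lambda>x. M *\<^sub>v f x))"
  hence i: "i < n" by simp
  have dimf: "\<And>x. dim_vec (f x) = n" using assms(2) carrier_vecD by blast
  have "(M *\<^sub>v vs n f) $ i = (\<Sum>k\<in>{0..<n}. M $$ (i, k) * (\<Sum>x\<in>UNIV. f x $ k))"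
    using assms i by (simp add: scalar_prod_def vs_index)
  also have "\<dots> = (\<Sum>x\<in>UNIV. \<Sum>k\<in>{0..<n}. M $$ (i, k) * f x $ k)"
    unfolding sum_distrib_left by (rule sum.swap)
  also have "\<dots> = vs n (\<lambda>x. M *\<^sub>v f x) $ i"
    using assms i by (simp add: scalar_prod_def vs_index dimf)
  finally show "(M *\<^sub>v vs n f) $ i = vs n (\<lambda>x. M *\<^sub>v f x) $ i" .
next
  show "dim_vec (M *\<^sub>v vs n f) = dim_vec (vs n (\<lambda>x. M *\<^sub>v f x))"
    using carrier_matD(1)[OF assms(1)] by simp
qed

lemma vs_smult: assumes "\<And>x. f x \<in> carrier_vec n" shows "c \<cdot>\<^sub>v vs n f = vs n (\<lambda>x. c \<cdot>\<^sub>v f x)"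
proof -
  have dimf: "\<And>x. dim_vec (f x) = n" using assms carrier_vecD by blast
  show ?thesis by (rule eq_vecI) (auto simp: vs_index sum_distrib_left dimf)
qed

lemma vs_reindex: "vs n (f :: 'a::{finite,ab_group_add} \<Rightarrow> complex vec) = vs n (\<lambda>x. f (x + a))"
proof -
  have "(\<Sum>x\<in>UNIV. f x $ r) = (\<Sum>x\<in>UNIV. f (x + a) $ r)" for r
    by (rule sum.reindex_bij_witness[of _ "\<lambda>x. x + a" "\<lambda>x. x - a"]) auto
  thus ?thesis by (simp add: vs_def)
qed

lemma smult_one_mat_vec:
  assumes "u \<in> carrier_vec n"
  shows "(c \<cdot>\<^sub>m 1\<^sub>m n) *\<^sub>v u = (c::complex) \<cdot>\<^sub>v u"
proof -
  have "(c \<cdot>\<^sub>m 1\<^sub>m n) *\<^sub>v u = c \<cdot>\<^sub>v (1\<^sub>m n *\<^sub>v u)"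
    by (rule eq_vecI) (use assms in auto)
  thus ?thesis using assms by simp
qed

lemma char_sum_zero:
  fixes f :: "'a::{finite,ab_group_add} \<Rightarrow> 'a"
  assumes "additive_character \<psi>" "\<And>a b. f (a + b) = f a + f b" "\<psi> (f y0) \<noteq> 1"
  shows "(\<Sum>y\<in>UNIV. \<psi> (f y)) = 0"
proof -
  let ?S = "\<Sum>y\<in>UNIV. \<psi> (f y)"
  have "?S = (\<Sum>y\<in>UNIV. \<psi> (f (y + y0)))"
    by (rule sum.reindex_bij_witness[of _ "\<lambda>x. x + y0" "\<lambda>x. x - y0"]) auto
  also have "\<dots> = (\<Sum>y\<in>UNIV. \<psi> (f y) * \<psi> (f y0))"
    using assms(1,2) by (simp add: additive_character_def)
  also have "\<dots> = ?S * \<psi> (f y0)" by (simp add: sum_distrib_right)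
  finally have "?S * (1 - \<psi> (f y0)) = 0" by (simp add: algebra_simps)
  thus ?thesis using assms(3) by simp
qed




locale L =
  fixes p q e h n :: nat and \<psi> :: "'a::{finite,field} \<Rightarrow> complex" and \<rho> :: "(nat \<Rightarrow> 'a) \<Rightarrow> complex mat"
  assumes prime: "prime p" and e1: "e \<ge> 1" and qdef: "q = p ^ e" and h2: "h \<ge> 2"
    and card: "card (UNIV :: 'a set) = q ^ 2"
    and addc: "additive_character \<psi>"
    and cond: "\<exists>x. \<psi> (x ^ q) \<noteq> \<psi> x"
    and irr: "irreducible_rep (U_carrier h) (U_mult h q) U_one n \<rho>"
    and top: "\<forall>c. \<rho> (H_top_elt h c) = \<psi> c \<cdot>\<^sub>m 1\<^sub>m n"
begin

lemma q_pos: "q > 0" using prime qdef prime_gt_0_nat by simp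

lemma card_p: "card (UNIV::'a set) = p ^ (2*e)"
  using card qdef by (simp add: power_mult[symmetric] mult.commute)

lemma frob: "(x + y :: 'a) ^ (q ^ i) = x ^ (q ^ i) + y ^ (q ^ i)"
proof -
  have "q ^ i = p ^ (e * i)" using qdef by (simp add: power_mult)
  thus ?thesis using ff_frob_add[OF prime card_p, of x y "e*i"] e1 by simp
qed

lemma psi_add: "\<psi> (a + b) = \<psi> a * \<psi> b"
  using addc by (simp add: additive_character_def)

lemma psi0: "\<psi> 0 = 1"
proof -
  have "\<psi> 0 = \<psi> 0 * \<psi> 0" using psi_add[of 0 0] by simp
  moreover have "\<psi> 0 \<noteq> 0" using addc by (simp add: additive_character_def)
  ultimately show ?thesis by simp
qed

lemma rho_car: "g \<in> U_carrier h \<Longrightarrow> \<rho> g \<in> carrier_mat n n"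
  using irr by (simp add: irreducible_rep_def is_rep_def)

lemma rho_mult: "g \<in> U_carrier h \<Longrightarrow> g' \<in> U_carrier h \<Longrightarrow> \<rho> (U_mult h q g g') = \<rho> g * \<rho> g'"
  using irr by (simp add: irreducible_rep_def is_rep_def)

lemma rho_one: "\<rho> U_one = 1\<^sub>m n"
  using irr by (simp add: irreducible_rep_def is_rep_def)

lemma n_pos: "n > 0"
  using irr by (simp add: irreducible_rep_def)

lemma rho_mv: "g \<in> U_carrier h \<Longrightarrow> g' \<in> U_carrier h \<Longrightarrow> u \<in> carrier_vec n \<Longrightarrow>
    \<rho> (U_mult h q g g') *\<^sub>v u = \<rho> g *\<^sub>v (\<rho> g' *\<^sub>v u)"
  using rho_mult assoc_mult_mat_vec rho_car by metis

lemma rho_top_vec: "u \<in> carrier_vec n \<Longrightarrow> \<rho> (E (2*(h-1)) c) *\<^sub>v u = \<psi> c \<cdot>\<^sub>v u"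
  using top H_top_E smult_one_mat_vec by metis

lemma rho_inj:
  assumes "g \<in> U_carrier h" "u \<in> carrier_vec n" "\<rho> g *\<^sub>v u = 0\<^sub>v n"
  shows "u = 0\<^sub>v n"
proof -
  obtain b where b: "b \<in> U_carrier h" "U_mult h q b g = U_one" using left_inv by blast
  have "u = 1\<^sub>m n *\<^sub>v u" using assms(2) by simp
  also have "\<dots> = \<rho> (U_mult h q b g) *\<^sub>v u" using b rho_one by simp
  also have "\<dots> = \<rho> b *\<^sub>v (\<rho> g *\<^sub>v u)" using rho_mv b assms by blast
  also have "\<dots> = 0\<^sub>v n" using assms(3) rho_car[OF b(1)] by auto
  finally show ?thesis .
qed

lemma H0'_car: "a \<in> H0' h \<Longrightarrow> a \<in> U_carrier h"
  by (simp add: H0'_def)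

lemma H0'_hi: "a \<in> H0' h \<Longrightarrow> i \<le> h - 1 \<Longrightarrow> a i = 0"
  using h2 by (auto simp: H0'_def)

lemma base_level:
  "\<exists>v\<in>carrier_vec n. v \<noteq> 0\<^sub>v n \<and>
     (\<forall>a\<in>H0' h. (\<forall>i<2*(h-1). a i = 0) \<longrightarrow> \<rho> a *\<^sub>v v = \<psi> (a (2*(h-1))) \<cdot>\<^sub>v v)"
proof (intro bexI conjI ballI impI)
  show "unit_vec n 0 \<in> carrier_vec n" by simp
  show "unit_vec n 0 \<noteq> 0\<^sub>v n" using n_pos unit_vec_nonzero by blast
  fix a :: "nat \<Rightarrow> 'a" assume a: "a \<in> H0' h" "\<forall>i<2*(h-1). a i = 0"
  have "a = E (2*(h-1)) (a (2*(h-1)))"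
  proof
    fix k
    show "a k = E (2*(h-1)) (a (2*(h-1))) k"
      using a H0'_car[OF a(1)] by (cases "k < 2*(h-1)") (auto simp: E_def U_carrier_def)
  qed
  hence "\<rho> a *\<^sub>v unit_vec n 0 = \<rho> (E (2*(h-1)) (a (2*(h-1)))) *\<^sub>v unit_vec n 0" by simp
  also have "\<dots> = \<psi> (a (2*(h-1))) \<cdot>\<^sub>v unit_vec n 0" by (rule rho_top_vec) simp
  finally show "\<rho> a *\<^sub>v unit_vec n 0 = \<psi> (a (2*(h-1))) \<cdot>\<^sub>v unit_vec n 0" .
qed

end



context L begin

lemma charsum:
  assumes so: "odd s" and j: "s + j = 2*(h-1)"
  shows "(\<Sum>y\<in>UNIV. \<psi> (x * y ^ (q ^ s) - y * x ^ (q ^ j))) =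
         (if x = 0 then of_nat (card (UNIV :: 'a set)) else 0)"
proof (cases "x = 0")
  case True
  thus ?thesis using q_pos psi0 by simp
next
  case False
  define d where "d y = x * y ^ (q ^ s) - y * x ^ (q ^ j)" for y
  obtain z where z: "\<psi> (z ^ q) \<noteq> \<psi> z" using cond by blast
  have xq: "x ^ (q ^ j) \<noteq> 0" using False by simp
  define y0 where "y0 = z / x ^ (q ^ j)"
  have "q ^ j * q ^ s = card (UNIV :: 'a set) ^ (h - 1)"
    using j card by (simp add: power_add[symmetric] power_mult[symmetric] add.commute)
  hence pw: "x ^ (q ^ j * q ^ s) = x" using ff_card_pow_iter by metis
  obtain k where k: "s = Suc (2 * k)" using so oddE by (metis Suc_eq_plus1)
  have "z ^ (q ^ s) = (z ^ q) ^ (card (UNIV :: 'a set) ^ k)"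
    using k card by (simp add: power_mult[symmetric] power_mult_distrib)
  hence zs: "z ^ (q ^ s) = z ^ q" using ff_card_pow_iter by metis
  have "y0 ^ (q ^ s) = z ^ q / x"
    unfolding y0_def power_divide zs using pw by (simp add: power_mult[symmetric])
  hence "d y0 = z ^ q - z" using False xq by (simp add: d_def y0_def)
  moreover have "\<psi> (z ^ q - z) \<noteq> 1"
  proof
    assume "\<psi> (z ^ q - z) = 1"
    hence "\<psi> (z ^ q) = \<psi> z" using psi_add[of "z ^ q - z" z] by simp
    thus False using z by simp
  qed
  ultimately have ne: "\<psi> (d y0) \<noteq> 1" by simp
  have add: "d (a + b) = d a + d b" for a b by (simp add: d_def frob algebra_simps)
  have "(\<Sum>y\<in>UNIV. \<psi> (d y)) = 0" by (rule char_sum_zero[OF addc add ne])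
  thus ?thesis using False by (simp add: d_def)
qed

end



context L begin

lemma step:
  assumes so: "odd s" and sm: "h - 1 < s" and sN: "s < 2*(h-1)"
    and wc: "w \<in> carrier_vec n" and w0: "w \<noteq> 0\<^sub>v n"
    and wA: "\<forall>a\<in>H0' h. (\<forall>i<Suc s. a i = 0) \<longrightarrow> \<rho> a *\<^sub>v w = \<psi> (a (2*(h-1))) \<cdot>\<^sub>v w"
  shows "\<exists>v\<in>carrier_vec n. v \<noteq> 0\<^sub>v n \<and>
     (\<forall>a\<in>H0' h. (\<forall>i<s. a i = 0) \<longrightarrow> \<rho> a *\<^sub>v v = \<psi> (a (2*(h-1))) \<cdot>\<^sub>v v)"
proof -
  define j where "j = 2*(h-1) - s"
  have j1: "1 \<le> j" "j < s" "s + j = 2*(h-1)" using sm sN h2 by (auto simp: j_def)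
  define d where "d x y = x * y ^ (q ^ s) - y * x ^ (q ^ j)" for x y :: 'a
  have tc: "E s x \<in> U_carrier h" for x by (rule E_carrier) (use sm sN in auto)
  have gc: "E j y \<in> U_carrier h" for y by (rule E_carrier) (use j1 in auto)
  have ENc: "E (2*(h-1)) c \<in> U_carrier h" for c by (rule E_carrier) (use h2 in auto)
  have thi: "\<forall>i\<le>h-1. E s x i = 0" for x using sm by (auto simp: E_def)
  have tt: "U_mult h q (E s x') (E s x) = E s (x' + x)" for x x'
  proof -
    have "U_mult h q (E s x') (E s x) = (\<lambda>k. E s x' k + E s x k)"
      by (rule mult_hi[OF q_pos tc tc thi thi])
    also have "\<dots> = E s (x' + x)" by (auto simp: E_def)
    finally show ?thesis .
  qed
  have rt: "\<rho> (E s x) \<in> carrier_mat n n" for x using rho_car tc by blast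
  have rg: "\<rho> (E j y) \<in> carrier_mat n n" for y using rho_car gc by blast
  have rel: "\<rho> (E s x) *\<^sub>v (\<rho> (E j y) *\<^sub>v u) = \<psi> (d x y) \<cdot>\<^sub>v (\<rho> (E j y) *\<^sub>v (\<rho> (E s x) *\<^sub>v u))"
    if uc: "u \<in> carrier_vec n" for u x y
  proof -
    have "\<rho> (E s x) *\<^sub>v (\<rho> (E j y) *\<^sub>v u) = \<rho> (U_mult h q (E s x) (E j y)) *\<^sub>v u"
      by (rule rho_mv[OF tc gc uc, symmetric])
    also have "\<dots> = \<rho> (U_mult h q (U_mult h q (E j y) (E s x)) (E (2*(h-1)) (d x y))) *\<^sub>v u"
      using comm_ts[OF q_pos j1(1) j1(2) _ h2, of x y] j1(3) by (simp add: d_def add.commute)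
    also have "\<dots> = \<rho> (U_mult h q (E j y) (E s x)) *\<^sub>v (\<rho> (E (2*(h-1)) (d x y)) *\<^sub>v u)"
      by (rule rho_mv[OF U_mult_carrier ENc uc])
    also have "\<dots> = \<rho> (U_mult h q (E j y) (E s x)) *\<^sub>v (\<psi> (d x y) \<cdot>\<^sub>v u)"
      using rho_top_vec uc by simp
    also have "\<dots> = \<psi> (d x y) \<cdot>\<^sub>v (\<rho> (U_mult h q (E j y) (E s x)) *\<^sub>v u)"
      by (rule mult_mat_vec[OF rho_car[OF U_mult_carrier] uc])
    also have "\<dots> = \<psi> (d x y) \<cdot>\<^sub>v (\<rho> (E j y) *\<^sub>v (\<rho> (E s x) *\<^sub>v u))"
      using rho_mv[OF gc tc uc] by simp
    finally show ?thesis .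
  qed
  have dx: "d (x1 + x2) y = d x1 y + d x2 y" for x1 x2 y by (simp add: d_def frob algebra_simps)
  have d0: "d 0 y = 0" for y using q_pos by (simp add: d_def)
  have dneg: "d x y + d (-x) y = 0" for x y using dx[of x "-x" y] d0 by simp
  have S: "(\<Sum>y\<in>UNIV. \<psi> (d x y)) = (if x = 0 then of_nat (card (UNIV :: 'a set)) else 0)" for x
    unfolding d_def by (rule charsum[OF so]) (use j1 in simp)
  define u where "u y = vs n (\<lambda>x. \<psi> (d x y) \<cdot>\<^sub>v (\<rho> (E s x) *\<^sub>v w))" for y
  have Fc: "\<psi> (d x y) \<cdot>\<^sub>v (\<rho> (E s x) *\<^sub>v w) \<in> carrier_vec n" for x y
    using mult_mat_vec_carrier[OF rt wc] by simp
  have uc: "u y \<in> carrier_vec n" for y by (simp add: u_def)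
  have "\<exists>y. u y \<noteq> 0\<^sub>v n"
  proof (rule ccontr)
    assume "\<not> (\<exists>y. u y \<noteq> 0\<^sub>v n)"
    hence all0: "\<And>y. u y = 0\<^sub>v n" by simp
    have "w = 0\<^sub>v n"
    proof (rule eq_vecI)
      fix r assume "r < dim_vec (0\<^sub>v n)"
      hence r: "r < n" by simp
      define F where "F x = (\<rho> (E s x) *\<^sub>v w) $ r" for x
      have "0 = (\<Sum>y\<in>UNIV. u y $ r)" using all0 r by simp
      also have "\<dots> = (\<Sum>y\<in>UNIV. \<Sum>x\<in>UNIV. \<psi> (d x y) * F x)"
        using r carrier_matD(1)[OF rt] by (simp add: u_def vs_index F_def)
      also have "\<dots> = (\<Sum>x\<in>UNIV. \<Sum>y\<in>UNIV. \<psi> (d x y) * F x)"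
        by (rule sum.swap)
      also have "\<dots> = (\<Sum>x\<in>UNIV. (\<Sum>y\<in>UNIV. \<psi> (d x y)) * F x)"
        by (simp add: sum_distrib_right)
      also have "\<dots> = (\<Sum>x\<in>UNIV. if x = (0::'a) then of_nat (card (UNIV :: 'a set)) * F 0 else 0)"
        by (rule sum.cong[OF refl]) (simp add: S)
      also have "\<dots> = of_nat (card (UNIV :: 'a set)) * F 0" by simp
      also have "F 0 = w $ r"
      proof -
        have "E s (0::'a) = U_one" by (simp add: E_def U_one_def fun_eq_iff)
        thus ?thesis using rho_one wc by (simp add: F_def)
      qed
      finally have "of_nat (card (UNIV :: 'a set)) * w $ r = 0" by simp
      moreover have "card (UNIV :: 'a set) \<noteq> 0" by simp
      ultimately show "w $ r = 0\<^sub>v n $ r" using r by simp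
    qed (use wc in simp)
    with w0 show False by simp
  qed
  then obtain y where uy: "u y \<noteq> 0\<^sub>v n" by blast
  define v where "v = \<rho> (E j y) *\<^sub>v u y"
  have vc: "v \<in> carrier_vec n" using mult_mat_vec_carrier[OF rg uc] by (simp add: v_def)
  have v0: "v \<noteq> 0\<^sub>v n" using rho_inj[OF gc uc] uy by (auto simp: v_def)
  have ut: "\<rho> (E s x') *\<^sub>v u y = \<psi> (d (-x') y) \<cdot>\<^sub>v u y" for x'
  proof -
    have "\<rho> (E s x') *\<^sub>v u y = vs n (\<lambda>x. \<rho> (E s x') *\<^sub>v (\<psi> (d x y) \<cdot>\<^sub>v (\<rho> (E s x) *\<^sub>v w)))"
      unfolding u_def by (rule vs_mult[OF rt Fc])
    also have "\<dots> = vs n (\<lambda>x. \<psi> (d x y) \<cdot>\<^sub>v (\<rho> (E s (x' + x)) *\<^sub>v w))"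
    proof -
      have "\<rho> (E s x') *\<^sub>v (\<psi> (d x y) \<cdot>\<^sub>v (\<rho> (E s x) *\<^sub>v w)) = \<psi> (d x y) \<cdot>\<^sub>v (\<rho> (E s (x' + x)) *\<^sub>v w)" for x
      proof -
        have "\<rho> (E s x') *\<^sub>v (\<psi> (d x y) \<cdot>\<^sub>v (\<rho> (E s x) *\<^sub>v w)) = \<psi> (d x y) \<cdot>\<^sub>v (\<rho> (E s x') *\<^sub>v (\<rho> (E s x) *\<^sub>v w))"
          by (rule mult_mat_vec[OF rt mult_mat_vec_carrier[OF rt wc]])
        also have "\<rho> (E s x') *\<^sub>v (\<rho> (E s x) *\<^sub>v w) = \<rho> (E s (x' + x)) *\<^sub>v w"
          using rho_mv[OF tc tc wc] tt by metis
        finally show ?thesis .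
      qed
      thus ?thesis by simp
    qed
    also have "\<dots> = vs n (\<lambda>x. \<psi> (d (x + - x') y) \<cdot>\<^sub>v (\<rho> (E s (x' + (x + - x'))) *\<^sub>v w))"
      by (rule vs_reindex)
    also have "\<dots> = vs n (\<lambda>x. \<psi> (d (-x') y) \<cdot>\<^sub>v (\<psi> (d x y) \<cdot>\<^sub>v (\<rho> (E s x) *\<^sub>v w)))"
    proof -
      have "d (x - x') y = d x y + d (-x') y" for x using dx[of x "-x'" y] by simp
      thus ?thesis by (simp add: psi_add smult_smult_assoc mult.commute)
    qed
    also have "\<dots> = \<psi> (d (-x') y) \<cdot>\<^sub>v u y"
      unfolding u_def by (rule vs_smult[symmetric]) (rule Fc)
    finally show ?thesis .
  qed
  have vt: "\<rho> (E s x) *\<^sub>v v = v" for x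
  proof -
    have "\<rho> (E s x) *\<^sub>v v = \<psi> (d x y) \<cdot>\<^sub>v (\<rho> (E j y) *\<^sub>v (\<rho> (E s x) *\<^sub>v u y))"
      unfolding v_def by (rule rel[OF uc])
    also have "\<dots> = \<psi> (d x y) \<cdot>\<^sub>v (\<psi> (d (-x) y) \<cdot>\<^sub>v v)"
      unfolding ut v_def using mult_mat_vec[OF rg uc] by simp
    also have "\<dots> = \<psi> (d x y + d (-x) y) \<cdot>\<^sub>v v" by (simp add: psi_add smult_smult_assoc)
    also have "\<dots> = v" using dneg psi0 by simp
    finally show ?thesis .
  qed
  have ua: "\<rho> a *\<^sub>v u y = \<psi> (a (2*(h-1))) \<cdot>\<^sub>v u y" if a: "a \<in> H0' h" "\<forall>i<Suc s. a i = 0" for a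
  proof -
    have ac: "a \<in> U_carrier h" using H0'_car a(1) .
    have ra: "\<rho> a \<in> carrier_mat n n" using rho_car ac by blast
    have ahi: "\<forall>i\<le>h-1. a i = 0" using H0'_hi a(1) by blast
    have com: "\<rho> a *\<^sub>v (\<rho> (E s x) *\<^sub>v w) = \<rho> (E s x) *\<^sub>v (\<rho> a *\<^sub>v w)" for x
    proof -
      have "U_mult h q a (E s x) = U_mult h q (E s x) a"
        using mult_hi[OF q_pos ac tc ahi thi] mult_hi[OF q_pos tc ac thi ahi] by (simp add: add.commute)
      thus ?thesis using rho_mv[OF ac tc wc, of x] rho_mv[OF tc ac wc, of x] by simp
    qed
    have "\<rho> a *\<^sub>v u y = vs n (\<lambda>x. \<rho> a *\<^sub>v (\<psi> (d x y) \<cdot>\<^sub>v (\<rho> (E s x) *\<^sub>v w)))"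
      unfolding u_def by (rule vs_mult[OF ra Fc])
    also have "\<dots> = vs n (\<lambda>x. \<psi> (a (2*(h-1))) \<cdot>\<^sub>v (\<psi> (d x y) \<cdot>\<^sub>v (\<rho> (E s x) *\<^sub>v w)))"
    proof -
      have "\<rho> a *\<^sub>v (\<psi> (d x y) \<cdot>\<^sub>v (\<rho> (E s x) *\<^sub>v w)) = \<psi> (a (2*(h-1))) \<cdot>\<^sub>v (\<psi> (d x y) \<cdot>\<^sub>v (\<rho> (E s x) *\<^sub>v w))" for x
      proof -
        have "\<rho> a *\<^sub>v (\<psi> (d x y) \<cdot>\<^sub>v (\<rho> (E s x) *\<^sub>v w)) = \<psi> (d x y) \<cdot>\<^sub>v (\<rho> (E s x) *\<^sub>v (\<rho> a *\<^sub>v w))"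
          using mult_mat_vec[OF ra mult_mat_vec_carrier[OF rt wc]] com by simp
        also have "\<dots> = \<psi> (d x y) \<cdot>\<^sub>v (\<rho> (E s x) *\<^sub>v (\<psi> (a (2*(h-1))) \<cdot>\<^sub>v w))"
          using wA a by simp
        also have "\<dots> = \<psi> (a (2*(h-1))) \<cdot>\<^sub>v (\<psi> (d x y) \<cdot>\<^sub>v (\<rho> (E s x) *\<^sub>v w))"
          using mult_mat_vec[OF rt wc] by (simp add: smult_smult_assoc mult.commute)
        finally show ?thesis .
      qed
      thus ?thesis by simp
    qed
    also have "\<dots> = \<psi> (a (2*(h-1))) \<cdot>\<^sub>v u y"
      unfolding u_def by (rule vs_smult[symmetric]) (rule Fc)
    finally show ?thesis .
  qed
  have va: "\<rho> a *\<^sub>v v = \<psi> (a (2*(h-1))) \<cdot>\<^sub>v v" if a: "a \<in> H0' h" "\<forall>i<Suc s. a i = 0" for a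
  proof -
    have ac: "a \<in> U_carrier h" using H0'_car a(1) .
    have "U_mult h q (E j y) a = U_mult h q a (E j y)"
      by (rule comm_lo[OF q_pos ac, of s j y]) (use a(2) j1 in auto)
    hence "\<rho> a *\<^sub>v v = \<rho> (E j y) *\<^sub>v (\<rho> a *\<^sub>v u y)"
      unfolding v_def using rho_mv[OF ac gc uc, of y y] rho_mv[OF gc ac uc, of y y] by simp
    also have "\<dots> = \<psi> (a (2*(h-1))) \<cdot>\<^sub>v v"
      unfolding ua[OF a] v_def by (rule mult_mat_vec[OF rg uc])
    finally show ?thesis .
  qed
  show ?thesis
  proof (intro bexI conjI ballI impI)
    show "v \<in> carrier_vec n" by (rule vc)
    show "v \<noteq> 0\<^sub>v n" by (rule v0)
    fix a :: "nat \<Rightarrow> 'a" assume a: "a \<in> H0' h" "\<forall>i<s. a i = 0"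
    define a' where "a' = a(s := 0)"
    have a'H: "a' \<in> H0' h" using a(1) by (auto simp: a'_def H0'_def U_carrier_def)
    have a'z: "\<forall>i<Suc s. a' i = 0" using a(2) by (auto simp: a'_def less_Suc_eq)
    have a'N: "a' (2*(h-1)) = a (2*(h-1))" using sN by (simp add: a'_def)
    have aeq: "U_mult h q (E s (a s)) a' = a"
      using mult_hi[OF q_pos tc H0'_car[OF a'H] thi, of "a s"] H0'_hi[OF a'H]
      by (auto simp: E_def a'_def fun_eq_iff)
    have "\<rho> a *\<^sub>v v = \<rho> (E s (a s)) *\<^sub>v (\<rho> a' *\<^sub>v v)"
      using rho_mv[OF tc H0'_car[OF a'H] vc, of "a s"] aeq by simp
    also have "\<dots> = \<rho> (E s (a s)) *\<^sub>v (\<psi> (a (2*(h-1))) \<cdot>\<^sub>v v)"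
      using va[OF a'H a'z] a'N by simp
    also have "\<dots> = \<psi> (a (2*(h-1))) \<cdot>\<^sub>v v"
      using mult_mat_vec[OF rt vc] vt by simp
    finally show "\<rho> a *\<^sub>v v = \<psi> (a (2*(h-1))) \<cdot>\<^sub>v v" .
  qed
qed

end



context L begin

lemma all_levels:
  "s \<le> 2*(h-1) \<Longrightarrow> \<exists>v\<in>carrier_vec n. v \<noteq> 0\<^sub>v n \<and>
     (\<forall>a\<in>H0' h. (\<forall>i<s. a i = 0) \<longrightarrow> \<rho> a *\<^sub>v v = \<psi> (a (2*(h-1))) \<cdot>\<^sub>v v)"
proof (induction s rule: inc_induct)
  case base
  show ?case by (rule base_level)
next
  case (step s)
  then obtain w where w: "w \<in> carrier_vec n" "w \<noteq> 0\<^sub>v n"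
    "\<forall>a\<in>H0' h. (\<forall>i<Suc s. a i = 0) \<longrightarrow> \<rho> a *\<^sub>v w = \<psi> (a (2*(h-1))) \<cdot>\<^sub>v w" by blast
  show ?case
  proof (cases "odd s \<and> h - 1 < s")
    case True
    thus ?thesis using L.step[OF L_axioms, of s w] step(2) w by blast
  next
    case False
    have "\<forall>a\<in>H0' h. (\<forall>i<s. a i = 0) \<longrightarrow> \<rho> a *\<^sub>v w = \<psi> (a (2*(h-1))) \<cdot>\<^sub>v w"
    proof (intro ballI impI)
      fix a :: "nat \<Rightarrow> 'a" assume a: "a \<in> H0' h" "\<forall>i<s. a i = 0"
      have "a s = 0" using a(1) False step(2) by (auto simp: H0'_def)
      hence "\<forall>i<Suc s. a i = 0" using a(2) by (auto simp: less_Suc_eq)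
      thus "\<rho> a *\<^sub>v w = \<psi> (a (2*(h-1))) \<cdot>\<^sub>v w" using w(3) a(1) by blast
    qed
    thus ?thesis using w(1,2) by blast
  qed
qed

lemma final: "restriction_contains (H0' h) n \<rho> (\<lambda>a. \<psi> (a (2 * (h - 1))))"
  using all_levels[of 0] unfolding restriction_contains_def by auto

end

theorem lemma2p2:
  fixes p q e h n :: nat
    and \<psi> :: "'a::{finite,field} \<Rightarrow> complex"
    and \<rho> :: "(nat \<Rightarrow> 'a) \<Rightarrow> complex mat"
  assumes "prime p" and "e \<ge> 1" and "q = p ^ e" and "h \<ge> 2"
    and "card (UNIV :: 'a set) = q ^ 2"
    and "additive_character \<psi>"
    and "\<exists>x. \<psi> (x ^ q) \<noteq> \<psi> x"
    and "irreducible_rep (U_carrier h) (U_mult h q) U_one n \<rho>"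
    and "\<forall>c. \<rho> (H_top_elt h c) = \<psi> c \<cdot>\<^sub>m 1\<^sub>m n"
  shows "restriction_contains (H0' h) n \<rho> (\<lambda>a. \<psi> (a (2 * (h - 1))))"
proof -
  interpret L p q e h n \<psi> \<rho> using assms by unfold_locales
  show ?thesis by (rule final)
qed



end
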